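(* For every ranking profile $R$ over a finite set of $m\geq 2$ candidates, there exists a ranking that is pair-priceable for $R$.
   Context: Let $C$ be a set of $m$ candidates. A ranking is a strict linear order over $C$; $\mathcal{R}$ denotes the set of all rankings over $C$. A ranking profile is a function $R:\mathcal{R}\to[0,1]$ with $\sum_\succ R(\succ)=1$. For a ranking $\succ$, $A(\succ)=\{(x,y)\in C\times C:x\succ y\}$. For $x\in X\subseteq C$, $u(\succ,x,X)=|\{y\in X\setminus\{x\}:x\succ y\}|$. A ranking $\rhd=x_1,\dots,x_m$ is pair-priceable for $R$ if there is $\pi:\mathcal{R}\times A(\rhd)\to[0,1]$ such that (1) $\pi(\succ,(x_i,x_j))\leq u(\succ,x_i,\{x_i,x_j\})$ for all $\succ$ and $(x_i,x_j)\in A(\rhd)$; (2) $\sum_{(x_i,x_j)\in A(\rhd)}\pi(\succ,(x_i,x_j))\leq\binom{m}{2}R(\succ)$ for all $\succ$; (3) $\sum_\succ\pi(\succ,(x_i,x_j))\leq1$ for all $(x_i,x_j)\in A(\rhd)$; (4) $\sum_\succ\sum_{(x_i,x_j)\in A(\rhd)}\pi(\succ,(x_i,x_j))>\binom{m}{2}-1$. *)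

theory Defs
  imports Main "HOL-Combinatorics.Multiset_Permutations"
begin

definition rankings :: "'a set \<Rightarrow> 'a list set" where
  "rankings C = permutations_of_set C"

definition prefers :: "'a list \<Rightarrow> 'a \<Rightarrow> 'a \<Rightarrow> bool" where
  "prefers r x y \<longleftrightarrow> (\<exists>i j. i < j \<and> j < length r \<and> r ! i = x \<and> r ! j = y)"

definition A_pairs :: "'a list \<Rightarrow> ('a \<times> 'a) set" where
  "A_pairs r = {(x, y). prefers r x y}"

definition u :: "'a list \<Rightarrow> 'a \<Rightarrow> 'a set \<Rightarrow> nat" where
  "u r x X = card {y \<in> X - {x}. prefers r x y}"

definition ranking_profile :: "'a set \<Rightarrow> ('a list \<Rightarrow> real) \<Rightarrow> bool" where
  "ranking_profile C R \<longleftrightarrow>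
     (\<forall>r \<in> rankings C. 0 \<le> R r \<and> R r \<le> 1) \<and> (\<Sum>r \<in> rankings C. R r) = 1"

definition pair_priceable :: "'a set \<Rightarrow> ('a list \<Rightarrow> real) \<Rightarrow> 'a list \<Rightarrow> bool" where
  "pair_priceable C R rr \<longleftrightarrow>
     (\<exists>\<pi> :: 'a list \<Rightarrow> ('a \<times> 'a) \<Rightarrow> real.
        (\<forall>r \<in> rankings C. \<forall>p \<in> A_pairs rr. 0 \<le> \<pi> r p \<and> \<pi> r p \<le> 1) \<and>
        (\<forall>r \<in> rankings C. \<forall>(x, y) \<in> A_pairs rr. \<pi> r (x, y) \<le> real (u r x {x, y})) \<and>
        (\<forall>r \<in> rankings C. (\<Sum>p \<in> A_pairs rr. \<pi> r p) \<le> real (card C choose 2) * R r) \<and>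
        (\<forall>p \<in> A_pairs rr. (\<Sum>r \<in> rankings C. \<pi> r p) \<le> 1) \<and>
        (\<Sum>r \<in> rankings C. \<Sum>p \<in> A_pairs rr. \<pi> r p) > real (card C choose 2) - 1)"

end

theory Submission
  imports Defs
begin

lemma prefers_set: "prefers r x y \<Longrightarrow> x \<in> set r \<and> y \<in> set r"
  unfolding prefers_def by auto

lemma prefers_asym: "distinct r \<Longrightarrow> prefers r x y \<Longrightarrow> \<not> prefers r y x"
  unfolding prefers_def
  by (metis (no_types, lifting) nth_eq_iff_index_eq order.strict_trans not_less_iff_gr_or_eq)

lemma prefers_irrefl: "distinct r \<Longrightarrow> \<not> prefers r x x"
  by (metis prefers_asym)

lemma prefers_trans: "distinct r \<Longrightarrow> prefers r x y \<Longrightarrow> prefers r y z \<Longrightarrow> prefers r x z"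
  unfolding prefers_def
  by (metis (no_types, lifting) nth_eq_iff_index_eq order.strict_trans)

lemma prefers_total: "x \<in> set r \<Longrightarrow> y \<in> set r \<Longrightarrow> x \<noteq> y \<Longrightarrow> prefers r x y \<or> prefers r y x"
  unfolding prefers_def in_set_conv_nth
  by (metis linorder_neqE_nat)

lemma prefers_Cons: "prefers (c # l) x y \<longleftrightarrow> (x = c \<and> y \<in> set l) \<or> prefers l x y"
proof
  assume "prefers (c # l) x y"
  then obtain i j where ij: "i < j" "j < length (c#l)" "(c#l)!i = x" "(c#l)!j = y"
    unfolding prefers_def by blast
  then obtain j' where j': "j = Suc j'" by (cases j) auto
  show "(x = c \<and> y \<in> set l) \<or> prefers l x y"
  proof (cases i)
    case 0 then show ?thesis using ij j' by auto
  next
    case (Suc i') then show ?thesis using ij j' unfolding prefers_def by auto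
  qed
next
  assume "(x = c \<and> y \<in> set l) \<or> prefers l x y"
  then show "prefers (c # l) x y"
  proof
    assume "x = c \<and> y \<in> set l"
    then obtain j where "j < length l" "l!j = y" by (auto simp: in_set_conv_nth)
    then show ?thesis unfolding prefers_def using \<open>x = c \<and> y \<in> set l\<close>
      by (intro exI[of _ 0] exI[of _ "Suc j"]) auto
  next
    assume "prefers l x y"
    then obtain i j where "i < j" "j < length l" "l!i = x" "l!j = y" unfolding prefers_def by blast
    then show ?thesis unfolding prefers_def by (intro exI[of _ "Suc i"] exI[of _ "Suc j"]) auto
  qed
qed

lemma prefers_Nil: "\<not> prefers [] a b"
  unfolding prefers_def by auto

lemma prefers_single: "\<not> prefers [y] a b"
  unfolding prefers_def by auto

lemma prefers_two: "prefers [x, y] a b \<longleftrightarrow> a = x \<and> b = y"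
  by (simp add: prefers_Cons prefers_single prefers_Nil)

definition mass :: "'v set \<Rightarrow> ('v \<Rightarrow> real) \<Rightarrow> ('v \<Rightarrow> bool) \<Rightarrow> real" where
  "mass V w P = (\<Sum>r\<in>V. if P r then w r else 0)"

lemma take_lemma:
  assumes "finite V" "\<forall>r\<in>V. 0 \<le> w r" "0 \<le> d" "mass V w P \<ge> d"
  shows "\<exists>f. (\<forall>r\<in>V. 0 \<le> f r \<and> f r \<le> w r) \<and> (\<forall>r\<in>V. \<not> P r \<longrightarrow> f r = 0) \<and> (\<Sum>r\<in>V. f r) = d"
proof -
  define s where "s = mass V w P"
  show ?thesis
  proof (cases "s = 0")
    case True
    then have "d = 0" using assms s_def by linarith
    then show ?thesis by (intro exI[of _ "\<lambda>_. 0"]) (auto simp: assms)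
  next
    case False
    then have sp: "s > 0" using assms s_def by linarith
    define f where "f r = (if P r then w r else 0) * (d / s)" for r
    have dle: "d / s \<le> 1" using sp assms s_def by (simp add: divide_le_eq)
    have "(\<Sum>r\<in>V. f r) = s * (d / s)" unfolding f_def s_def mass_def by (rule sum_distrib_right[symmetric])
    also have "\<dots> = d" using sp by simp
    finally have 1: "(\<Sum>r\<in>V. f r) = d" .
    have 2: "\<forall>r\<in>V. 0 \<le> f r \<and> f r \<le> w r"
    proof
      fix r assume r: "r \<in> V"
      have "0 \<le> d / s" using sp assms by simp
      moreover have "0 \<le> w r" using r assms by auto
      ultimately show "0 \<le> f r \<and> f r \<le> w r" using dle unfolding f_def
        by (auto simp del: times_divide_eq_right intro: mult_left_le)
    qed
    show ?thesis using 1 2 by (intro exI[of _ f]) (auto simp: f_def)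
  qed
qed

lemma alloc_lemma:
  assumes V: "finite V" and w: "\<forall>r\<in>V. 0 \<le> w r" and ds: "distinct ys"
    and m: "\<forall>j<length ys. mass V w (P (ys!j)) \<ge> real j + 1"
  shows "\<exists>\<phi>. (\<forall>y\<in>set ys. \<forall>r\<in>V. 0 \<le> \<phi> y r) \<and> (\<forall>y\<in>set ys. \<forall>r\<in>V. \<not> P y r \<longrightarrow> \<phi> y r = 0)
     \<and> (\<forall>y\<in>set ys. (\<Sum>r\<in>V. \<phi> y r) = 1) \<and> (\<forall>r\<in>V. (\<Sum>y\<in>set ys. \<phi> y r) \<le> w r)"
  using ds m
proof (induction ys rule: rev_induct)
  case Nil
  then show ?case using w by (intro exI[of _ "\<lambda>_ _. 0"]) auto
next
  case (snoc y ys)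
  have ds: "distinct ys" and yn: "y \<notin> set ys" using snoc.prems by auto
  have "\<forall>j<length ys. mass V w (P (ys!j)) \<ge> real j + 1"
  proof (intro allI impI)
    fix j assume "j < length ys"
    then show "mass V w (P (ys!j)) \<ge> real j + 1"
      using snoc.prems(2)[rule_format, of j] by (simp add: nth_append)
  qed
  then obtain \<phi> where p1: "\<forall>y\<in>set ys. \<forall>r\<in>V. 0 \<le> \<phi> y r"
    and p2: "\<forall>y\<in>set ys. \<forall>r\<in>V. \<not> P y r \<longrightarrow> \<phi> y r = 0"
    and p3: "\<forall>y\<in>set ys. (\<Sum>r\<in>V. \<phi> y r) = 1"
    and p4: "\<forall>r\<in>V. (\<Sum>y\<in>set ys. \<phi> y r) \<le> w r"
    using snoc.IH ds by blast
  define w' where "w' r = w r - (\<Sum>y\<in>set ys. \<phi> y r)" for r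
  have w'0: "\<forall>r\<in>V. 0 \<le> w' r" using p4 by (auto simp: w'_def)
  have my: "mass V w (P y) \<ge> real (length ys) + 1"
    using snoc.prems(2)[rule_format, of "length ys"] by simp
  have e1: "mass V w' (P y) = mass V w (P y) - (\<Sum>r\<in>V. if P y r then (\<Sum>y\<in>set ys. \<phi> y r) else 0)"
    unfolding mass_def w'_def sum_subtractf[symmetric] by (rule sum.cong) auto
  have e2: "(\<Sum>r\<in>V. if P y r then (\<Sum>y\<in>set ys. \<phi> y r) else 0) \<le> (\<Sum>r\<in>V. (\<Sum>y\<in>set ys. \<phi> y r))"
    by (rule sum_mono) (use p1 in \<open>auto intro: sum_nonneg\<close>)
  have e3: "(\<Sum>r\<in>V. (\<Sum>y\<in>set ys. \<phi> y r)) = (\<Sum>y\<in>set ys. (\<Sum>r\<in>V. \<phi> y r))"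
    by (rule sum.swap)
  have e4: "(\<Sum>y\<in>set ys. (\<Sum>r\<in>V. \<phi> y r)) = real (length ys)" using p3 ds by (simp add: distinct_card)
  have mw': "mass V w' (P y) \<ge> 1" using my e1 e2 e3 e4 by linarith
  obtain f where f1: "\<forall>r\<in>V. 0 \<le> f r \<and> f r \<le> w' r" and f2: "\<forall>r\<in>V. \<not> P y r \<longrightarrow> f r = 0"
    and f3: "(\<Sum>r\<in>V. f r) = 1"
    using take_lemma[OF V w'0 _ mw'] by auto
  define \<psi> where "\<psi> = \<phi>(y := f)"
  have sumeq: "(\<Sum>y'\<in>set (ys @ [y]). \<psi> y' r) = f r + (\<Sum>y'\<in>set ys. \<phi> y' r)" for r
  proof -
    have "(\<Sum>y'\<in>set (ys @ [y]). \<psi> y' r) = \<psi> y r + (\<Sum>y'\<in>set ys. \<psi> y' r)"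
      using yn by simp
    also have "(\<Sum>y'\<in>set ys. \<psi> y' r) = (\<Sum>y'\<in>set ys. \<phi> y' r)"
      using yn by (intro sum.cong) (auto simp: \<psi>_def)
    finally show ?thesis by (simp add: \<psi>_def)
  qed
  show ?case
  proof (intro exI[of _ \<psi>] conjI)
    show "\<forall>y'\<in>set (ys @ [y]). \<forall>r\<in>V. 0 \<le> \<psi> y' r" using p1 f1 by (auto simp: \<psi>_def)
    show "\<forall>y'\<in>set (ys @ [y]). \<forall>r\<in>V. \<not> P y' r \<longrightarrow> \<psi> y' r = 0" using p2 f2 by (auto simp: \<psi>_def)
    show "\<forall>y'\<in>set (ys @ [y]). (\<Sum>r\<in>V. \<psi> y' r) = 1" using p3 f3 yn by (auto simp: \<psi>_def)
    show "\<forall>r\<in>V. (\<Sum>y'\<in>set (ys @ [y]). \<psi> y' r) \<le> w r"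
    proof
      fix r assume "r \<in> V"
      then show "(\<Sum>y'\<in>set (ys @ [y]). \<psi> y' r) \<le> w r"
        unfolding sumeq using f1 by (auto simp: w'_def)
    qed
  qed
qed

lemma mass_disj: "finite V \<Longrightarrow> mass V w (\<lambda>r. P r \<or> Q r) = mass V w Q + mass V w (\<lambda>r. P r \<and> \<not> Q r)"
  unfolding mass_def sum.distrib[symmetric] by (rule sum.cong) auto

lemma mass_conj: "finite V \<Longrightarrow> mass V w P = mass V w (\<lambda>r. P r \<and> Q r) + mass V w (\<lambda>r. P r \<and> \<not> Q r)"
  unfolding mass_def sum.distrib[symmetric] by (rule sum.cong) auto

lemma twoset_lemma:
  assumes V: "finite V" and w: "\<forall>r\<in>V. 0 \<le> w r"
    and mP: "mass V w P \<ge> 1" and mQ: "mass V w Q \<ge> 1" and mPQ: "mass V w (\<lambda>r. P r \<or> Q r) \<ge> 2"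
  shows "\<exists>f g. (\<forall>r\<in>V. 0 \<le> f r \<and> 0 \<le> g r \<and> f r + g r \<le> w r) \<and> (\<forall>r\<in>V. \<not> P r \<longrightarrow> f r = 0)
     \<and> (\<forall>r\<in>V. \<not> Q r \<longrightarrow> g r = 0) \<and> (\<Sum>r\<in>V. f r) = 1 \<and> (\<Sum>r\<in>V. g r) = 1"
proof -
  define a where "a = mass V w (\<lambda>r. P r \<and> \<not> Q r)"
  show ?thesis
  proof (cases "a \<ge> 1")
    case True
    obtain f where f1: "\<forall>r\<in>V. 0 \<le> f r \<and> f r \<le> w r" and f2: "\<forall>r\<in>V. \<not> (P r \<and> \<not> Q r) \<longrightarrow> f r = 0"
      and f3: "(\<Sum>r\<in>V. f r) = 1"
      using take_lemma[OF V w _, of 1 "\<lambda>r. P r \<and> \<not> Q r"] True a_def by auto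
    obtain g where g1: "\<forall>r\<in>V. 0 \<le> g r \<and> g r \<le> w r" and g2: "\<forall>r\<in>V. \<not> Q r \<longrightarrow> g r = 0"
      and g3: "(\<Sum>r\<in>V. g r) = 1"
      using take_lemma[OF V w _ mQ] by auto
    have "\<forall>r\<in>V. f r + g r \<le> w r"
    proof
      fix r assume r: "r \<in> V"
      show "f r + g r \<le> w r"
      proof (cases "Q r")
        case True then show ?thesis using f2 g1 r by auto
      next
        case False then show ?thesis using f1 g2 r by auto
      qed
    qed
    then show ?thesis using f1 f2 f3 g1 g2 g3
      by (intro exI[of _ f] exI[of _ g]) auto
  next
    case False
    have a0: "0 \<le> a" unfolding a_def mass_def using w by (auto intro: sum_nonneg)
    have mPQ': "mass V w (\<lambda>r. P r \<and> Q r) \<ge> 1 - a"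
      using mass_conj[OF V, of w P Q] mP a_def by linarith
    obtain f2 where f21: "\<forall>r\<in>V. 0 \<le> f2 r \<and> f2 r \<le> w r" and f22: "\<forall>r\<in>V. \<not> (P r \<and> Q r) \<longrightarrow> f2 r = 0"
      and f23: "(\<Sum>r\<in>V. f2 r) = 1 - a"
      using take_lemma[OF V w _ mPQ'] False by auto
    define f where "f r = (if P r \<and> \<not> Q r then w r else 0) + f2 r" for r
    define w' where "w' r = w r - f r" for r
    have w'0: "\<forall>r\<in>V. 0 \<le> w' r" using f21 f22 w unfolding w'_def f_def by auto
    have "mass V w' Q = mass V w Q - mass V f2 Q"
      unfolding mass_def w'_def f_def sum_subtractf[symmetric] by (rule sum.cong) auto
    also have "mass V f2 Q = (\<Sum>r\<in>V. f2 r)"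
      unfolding mass_def using f22 by (intro sum.cong) auto
    finally have "mass V w' Q = mass V w Q - (1 - a)" using f23 by simp
    moreover have "mass V w Q + a \<ge> 2" using mass_disj[OF V, of w P Q] mPQ a_def by linarith
    ultimately have mw': "mass V w' Q \<ge> 1" by linarith
    obtain g where g1: "\<forall>r\<in>V. 0 \<le> g r \<and> g r \<le> w' r" and g2: "\<forall>r\<in>V. \<not> Q r \<longrightarrow> g r = 0"
      and g3: "(\<Sum>r\<in>V. g r) = 1"
      using take_lemma[OF V w'0 _ mw'] by auto
    have fs: "(\<Sum>r\<in>V. f r) = 1"
    proof -
      have "(\<Sum>r\<in>V. f r) = a + (\<Sum>r\<in>V. f2 r)"
        unfolding f_def a_def mass_def by (simp add: sum.distrib)
      then show ?thesis using f23 by simp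
    qed
    have A1: "\<forall>r\<in>V. 0 \<le> f r \<and> 0 \<le> g r \<and> f r + g r \<le> w r"
      using f21 g1 w unfolding f_def w'_def by auto
    have A2: "\<forall>r\<in>V. \<not> P r \<longrightarrow> f r = 0" using f22 unfolding f_def by auto
    show ?thesis using A1 A2 g2 fs g3 by blast
  qed
qed

lemma choose2_real: "2 * real (n choose 2) = real n * (real n - 1)"
proof (induction n)
  case 0 then show ?case by simp
next
  case (Suc n)
  have "Suc n choose 2 = n + (n choose 2)"
    by (simp add: numeral_2_eq_2)
  then show ?case using Suc by (simp add: algebra_simps)
qed

lemma choose_Suc2: "Suc n choose 2 = n + (n choose 2)"
  by (simp add: numeral_2_eq_2)

definition lam :: "'a list set \<Rightarrow> ('a list \<Rightarrow> real) \<Rightarrow> 'a \<Rightarrow> 'a \<Rightarrow> real" where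
  "lam V \<rho> x y = mass V \<rho> (\<lambda>r. prefers r x y)"

lemma lam_nonneg: "\<forall>r\<in>V. 0 \<le> \<rho> r \<Longrightarrow> 0 \<le> lam V \<rho> x y"
  unfolding lam_def mass_def by (auto intro: sum_nonneg)

lemma lam_self: "V \<subseteq> permutations_of_set C \<Longrightarrow> lam V \<rho> x x = 0"
  unfolding lam_def mass_def
  by (auto intro!: sum.neutral dest!: subsetD permutations_of_setD(2) simp: prefers_irrefl)

lemma lam_sum1:
  assumes V: "V = permutations_of_set C" and x: "x \<in> C" and y: "y \<in> C" and xy: "x \<noteq> y"
    and s: "(\<Sum>r\<in>V. \<rho> r) = 1"
  shows "lam V \<rho> x y + lam V \<rho> y x = 1"
proof -
  have "lam V \<rho> x y + lam V \<rho> y x = (\<Sum>r\<in>V. \<rho> r)"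
    unfolding lam_def mass_def sum.distrib[symmetric]
  proof (rule sum.cong)
    fix r assume r: "r \<in> V"
    then have d: "distinct r" and sr: "set r = C" using V permutations_of_setD by auto
    have "prefers r x y \<or> prefers r y x" using prefers_total[of x r y] x y xy sr by auto
    moreover have "\<not> (prefers r x y \<and> prefers r y x)" using prefers_asym[OF d] by blast
    ultimately show "(if prefers r x y then \<rho> r else 0) + (if prefers r y x then \<rho> r else 0) = \<rho> r"
      by auto
  qed simp
  then show ?thesis using s by simp
qed

definition ind :: "bool \<Rightarrow> real" where "ind b = (if b then 1 else 0)"

lemma mass_ind: "mass V \<rho> P = (\<Sum>r\<in>V. \<rho> r * ind (P r))"
  unfolding mass_def ind_def by (rule sum.cong) auto

lemma lam_tri:
  assumes V: "V = permutations_of_set C" and c: "c \<in> C" and y: "y \<in> C" and z: "z \<in> C"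
    and yc: "y \<noteq> c" and yz: "y \<noteq> z"
    and nn: "\<forall>r\<in>V. 0 \<le> \<rho> r" and s: "(\<Sum>r\<in>V. \<rho> r) = 1"
  shows "lam V \<rho> y z - lam V \<rho> c z + lam V \<rho> c y \<ge> ind (z = c)"
proof -
  have "(\<Sum>r\<in>V. \<rho> r * ind (z = c)) \<le>
        (\<Sum>r\<in>V. \<rho> r * (ind (prefers r y z) - ind (prefers r c z) + ind (prefers r c y)))"
  proof (rule sum_mono)
    fix r assume r: "r \<in> V"
    then have d: "distinct r" and sr: "set r = C" using V permutations_of_setD by auto
    have tot: "\<And>a b. a \<in> C \<Longrightarrow> b \<in> C \<Longrightarrow> a \<noteq> b \<Longrightarrow> prefers r a b \<or> prefers r b a"
      using prefers_total sr by metis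
    have "0 \<le> \<rho> r" using nn r by auto
    moreover have "ind (z = c) \<le> ind (prefers r y z) - ind (prefers r c z) + ind (prefers r c y)"
    proof (cases "z = c")
      case True
      have "prefers r y c \<or> prefers r c y" by (rule tot[OF y c yc])
      then show ?thesis using True prefers_irrefl[OF d] by (auto simp: ind_def)
    next
      case zc: False
      show ?thesis
      proof (cases "prefers r c z")
        case True
        then have "prefers r y z \<or> prefers r c y"
          using tot[OF y z yz] prefers_trans[OF d] by blast
        then show ?thesis using zc by (auto simp: ind_def)
      next
        case False
        then show ?thesis using zc by (auto simp: ind_def)
      qed
    qed
    ultimately show "\<rho> r * ind (z = c) \<le> \<rho> r * (ind (prefers r y z) - ind (prefers r c z) + ind (prefers r c y))"
      by (simp add: mult_left_mono)
  qed
  also have "\<dots> = lam V \<rho> y z - lam V \<rho> c z + lam V \<rho> c y"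
    unfolding lam_def mass_ind by (simp add: sum.distrib sum_subtractf algebra_simps)
  finally show ?thesis using s by (simp add: sum_distrib_right[symmetric])
qed

lemma nat_ineq_aux: "(k::nat) \<le> N - 1 \<Longrightarrow> N \<ge> 4 \<Longrightarrow> 4 * k \<le> (k + 1) * (N - 1)"
proof (cases "N = 4")
  case True
  assume "k \<le> N - 1" then show ?thesis using True by simp
next
  case False
  assume "N \<ge> 4" then have "N - 1 \<ge> 4" using False by simp
  then have "(k + 1) * 4 \<le> (k + 1) * (N - 1)" by (rule mult_left_mono) simp
  then show ?thesis by simp
qed

lemma borda_key:
  fixes C :: "'a set" and \<rho> :: "'a list \<Rightarrow> real"
  assumes V: "V = permutations_of_set C" and fin: "finite C" and DC: "D \<subseteq> C"
    and N: "card D = N" "N \<ge> 4"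
    and nn: "\<forall>r\<in>V. 0 \<le> \<rho> r" and s: "(\<Sum>r\<in>V. \<rho> r) = 1"
    and cD: "c \<in> D" and cmax: "\<forall>x\<in>D. (\<Sum>z\<in>D. lam V \<rho> x z) \<le> (\<Sum>z\<in>D. lam V \<rho> c z)"
    and Y: "Y \<subseteq> D - {c}" and k: "card Y = k" "k \<ge> 1"
    and small: "\<forall>y\<in>Y. lam V \<rho> c y * real (N choose 2) < real k"
  shows False
proof -
  define L where "L = lam V \<rho>"
  define B where "B x = (\<Sum>z\<in>D. L x z)" for x
  define S where "S = (\<Sum>y\<in>Y. L c y)"
  have finD: "finite D" using fin DC finite_subset by auto
  have finY: "finite Y" using finD Y finite_subset by auto
  have YD: "Y \<subseteq> D" and cY: "c \<notin> Y" using Y by auto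
  have cC: "c \<in> C" using cD DC by auto
  have Bdiff: "B y - B c \<ge> (\<Sum>z\<in>Y. L y z) - S + 1 - real (N - k) * L c y" if yY: "y \<in> Y" for y
  proof -
    have yD: "y \<in> D" and yc: "y \<noteq> c" using yY Y by auto
    have yC: "y \<in> C" using yD DC by auto
    have "B y - B c = (\<Sum>z\<in>D. L y z - L c z)" unfolding B_def by (simp add: sum_subtractf)
    also have "\<dots> = (\<Sum>z\<in>D - Y. L y z - L c z) + (\<Sum>z\<in>Y. L y z - L c z)"
      by (rule sum.subset_diff[OF YD finD])
    finally have e1: "B y - B c = (\<Sum>z\<in>D - Y. L y z - L c z) + (\<Sum>z\<in>Y. L y z - L c z)" .
    have e2: "(\<Sum>z\<in>D - Y. ind (z = c) - L c y) \<le> (\<Sum>z\<in>D - Y. L y z - L c z)"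
    proof (rule sum_mono)
      fix z assume z: "z \<in> D - Y"
      then have "z \<in> C" "y \<noteq> z" using DC yY by auto
      then show "ind (z = c) - L c y \<le> L y z - L c z"
        using lam_tri[OF V cC yC _ yc _ nn s, of z] unfolding L_def by auto
    qed
    have cDY: "c \<in> D - Y" using cD cY by auto
    have e3: "(\<Sum>z\<in>D - Y. ind (z = c)) = 1"
      using cDY finD by (simp add: ind_def sum.delta')
    have cardDY: "card (D - Y) = N - k" using card_Diff_subset[OF finY YD] N k by simp
    have e4: "(\<Sum>z\<in>D - Y. ind (z = c) - L c y) = 1 - real (N - k) * L c y"
      using e3 cardDY by (simp add: sum_subtractf)
    have e5: "(\<Sum>z\<in>Y. L y z - L c z) = (\<Sum>z\<in>Y. L y z) - S"
      unfolding S_def by (simp add: sum_subtractf)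
    show ?thesis using e1 e2 e4 e5 by linarith
  qed
  have sumB: "(\<Sum>y\<in>Y. B y - B c) \<le> 0"
    by (rule sum_nonpos) (use cmax YD in \<open>auto simp: B_def L_def\<close>)
  have pairs: "2 * (\<Sum>y\<in>Y. \<Sum>z\<in>Y. L y z) = real k * (real k - 1)"
  proof -
    have sw: "(\<Sum>y\<in>Y. \<Sum>z\<in>Y. L y z) = (\<Sum>y\<in>Y. \<Sum>z\<in>Y. L z y)" by (rule sum.swap)
    have inner: "(\<Sum>z\<in>Y. L y z + L z y) = real k - 1" if yY: "y \<in> Y" for y
    proof -
      have "(\<Sum>z\<in>Y. L y z + L z y) = (\<Sum>z\<in>Y. 1 - ind (z = y))"
      proof (rule sum.cong)
        fix z assume zY: "z \<in> Y"
        have yC: "y \<in> C" and zC: "z \<in> C" using yY zY Y DC by auto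
        show "L y z + L z y = 1 - ind (z = y)"
        proof (cases "z = y")
          case True then show ?thesis using lam_self[of V C \<rho> y] V by (simp add: L_def ind_def)
        next
          case False then show ?thesis using lam_sum1[OF V yC zC _ s] by (simp add: L_def ind_def)
        qed
      qed simp
      also have "\<dots> = real k - 1" using yY finY k by (simp add: sum_subtractf ind_def sum.delta')
      finally show ?thesis .
    qed
    have "2 * (\<Sum>y\<in>Y. \<Sum>z\<in>Y. L y z) = (\<Sum>y\<in>Y. \<Sum>z\<in>Y. L y z + L z y)"
      using sw by (simp add: sum.distrib)
    also have "\<dots> = (\<Sum>y\<in>Y. real k - 1)" using inner by (rule sum.cong[OF refl])
    also have "\<dots> = real k * (real k - 1)" using k by simp
    finally show ?thesis .
  qed
  have "(\<Sum>y\<in>Y. (\<Sum>z\<in>Y. L y z) - S + 1 - real (N - k) * L c y) \<le> (\<Sum>y\<in>Y. B y - B c)"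
    using Bdiff by (rule sum_mono)
  moreover have "(\<Sum>y\<in>Y. (\<Sum>z\<in>Y. L y z) - S + 1 - real (N - k) * L c y)
      = (\<Sum>y\<in>Y. \<Sum>z\<in>Y. L y z) - real k * S + real k - real (N - k) * S"
    unfolding S_def using k by (simp add: sum.distrib sum_subtractf sum_distrib_left)
  ultimately have main: "(\<Sum>y\<in>Y. \<Sum>z\<in>Y. L y z) - real k * S + real k - real (N - k) * S \<le> 0"
    using sumB by linarith
  have kN: "k \<le> N - 1"
  proof -
    have "card Y \<le> card (D - {c})" using Y finD by (intro card_mono) auto
    then show ?thesis using k N cD finD by simp
  qed
  have Nk: "real (N - k) = real N - real k" using kN N by (simp add: of_nat_diff)
  have NS: "real N * S \<ge> real k * (real k + 1) / 2"
    using main pairs Nk by (simp add: algebra_simps)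
  define M where "M = real (N choose 2)"
  have M2: "2 * M = real N * (real N - 1)" unfolding M_def by (rule choose2_real)
  have "real N * (real N - 1) > 0" using N by (intro mult_pos_pos) auto
  then have Mpos: "M > 0" using M2 by linarith
  have SM: "S * M < real k * real k"
  proof -
    have Yne: "Y \<noteq> {}" using k by auto
    have "S * M = (\<Sum>y\<in>Y. L c y * M)" unfolding S_def by (simp add: sum_distrib_right)
    also have "\<dots> < (\<Sum>y\<in>Y. real k)"
      by (rule sum_strict_mono[OF finY Yne]) (use small in \<open>auto simp: L_def M_def\<close>)
    also have "\<dots> = real k * real k" using k by simp
    finally show ?thesis .
  qed
  have Npos: "real N > 0" using N by simp
  have kpos: "real k > 0" using k by simp
  have "real k * (real k + 1) / 2 * M \<le> real N * S * M"
    using NS Mpos by (intro mult_right_mono) auto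
  also have "real N * S * M = real N * (S * M)" by simp
  also have "\<dots> < real N * (real k * real k)" using SM Npos by (intro mult_strict_left_mono)
  finally have "real k * (real k + 1) / 2 * M < real N * (real k * real k)" .
  then have "real k * (real k + 1) * (2 * M) < 4 * (real N * (real k * real k))" by (simp add: algebra_simps)
  then have "(real N * real k) * ((real k + 1) * (real N - 1)) < (real N * real k) * (4 * real k)"
    unfolding M2 by (simp add: algebra_simps)
  then have lt: "(real k + 1) * (real N - 1) < 4 * real k"
    using Npos kpos by (simp add: mult_less_cancel_left_pos)
  have "4 * k \<le> (k + 1) * (N - 1)" using nat_ineq_aux kN N by simp
  then have h1: "real (4 * k) \<le> real ((k + 1) * (N - 1))" by (simp only: of_nat_le_iff)
  have h2: "real ((k + 1) * (N - 1)) = (real k + 1) * real (N - 1)" by (simp only: of_nat_mult of_nat_add of_nat_1)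
  have h3: "real (N - 1) = real N - 1" using N by (simp add: of_nat_diff)
  have h4: "real (4 * k) = 4 * real k" by simp
  have "4 * real k \<le> (real k + 1) * (real N - 1)" using h1 unfolding h2 h3 h4 .
  then show False using lt by linarith
qed

lemma mass_scale: "mass V (\<lambda>r. a * w r) P = a * mass V w P"
  unfolding mass_def by (simp add: sum_distrib_left if_distrib cong: if_cong)

lemma mass_mono: "\<forall>r\<in>V. 0 \<le> w r \<Longrightarrow> \<forall>r\<in>V. P r \<longrightarrow> Q r \<Longrightarrow> mass V w P \<le> mass V w Q"
  unfolding mass_def by (rule sum_mono) auto

lemma mass_and: 
  assumes "\<forall>r\<in>V. 0 \<le> w r"
  shows "mass V w (\<lambda>r. P r \<and> Q r) \<ge> mass V w P + mass V w Q - (\<Sum>r\<in>V. w r)"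
proof -
  have "mass V w P + mass V w Q - (\<Sum>r\<in>V. w r) = (\<Sum>r\<in>V. w r * (ind (P r) + ind (Q r) - 1))"
    unfolding mass_ind by (simp add: sum.distrib sum_subtractf algebra_simps)
  also have "\<dots> \<le> (\<Sum>r\<in>V. w r * ind (P r \<and> Q r))"
    by (rule sum_mono) (use assms in \<open>auto simp: ind_def\<close>)
  finally show ?thesis unfolding mass_ind .
qed

lemma star_big:
  fixes C :: "'a set" and \<rho> :: "'a list \<Rightarrow> real"
  assumes V: "V = permutations_of_set C" and fin: "finite C" and DC: "D \<subseteq> C"
    and N: "card D = N" "N \<ge> 4"
    and nn: "\<forall>r\<in>V. 0 \<le> \<rho> r" and s: "(\<Sum>r\<in>V. \<rho> r) = 1"
  shows "\<exists>c\<in>D. \<exists>\<psi>. (\<forall>y\<in>D-{c}. \<forall>r\<in>V. 0 \<le> \<psi> y r) \<and> (\<forall>y\<in>D-{c}. \<forall>r\<in>V. \<not> prefers r c y \<longrightarrow> \<psi> y r = 0)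
     \<and> (\<forall>y\<in>D-{c}. (\<Sum>r\<in>V. \<psi> y r) = 1) \<and> (\<forall>r\<in>V. (\<Sum>y\<in>D-{c}. \<psi> y r) \<le> real (N choose 2) * \<rho> r)"
proof -
  define B where "B x = (\<Sum>z\<in>D. lam V \<rho> x z)" for x
  have finD: "finite D" using fin DC finite_subset by auto
  have Dne: "D \<noteq> {}" using N by auto
  have "Max (B ` D) \<in> B ` D" using finD Dne by (intro Max_in) auto
  then obtain c where cD: "c \<in> D" and cM: "B c = Max (B ` D)" by auto
  have cmax: "\<forall>x\<in>D. (\<Sum>z\<in>D. lam V \<rho> x z) \<le> (\<Sum>z\<in>D. lam V \<rho> c z)"
  proof
    fix x assume "x \<in> D"
    then have "B x \<le> Max (B ` D)" using finD by (intro Max_ge) auto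
    then show "(\<Sum>z\<in>D. lam V \<rho> x z) \<le> (\<Sum>z\<in>D. lam V \<rho> c z)" using cM by (simp add: B_def)
  qed
  define f where "f y = lam V \<rho> c y" for y
  obtain xs where xs: "set xs = D - {c}" "distinct xs" using finD finite_distinct_list by blast
  define ys where "ys = sort_key f xs"
  have sys: "set ys = D - {c}" using xs by (simp add: ys_def)
  have dys: "distinct ys" using xs by (simp add: ys_def)
  have srt: "sorted (map f ys)" by (simp add: ys_def)
  define M where "M = real (N choose 2)"
  have M2: "2 * M = real N * (real N - 1)" unfolding M_def by (rule choose2_real)
  have "real N * (real N - 1) > 0" using N by (intro mult_pos_pos) auto
  then have Mpos: "M > 0" using M2 by linarith
  define w where "w r = M * \<rho> r" for r
  have w0: "\<forall>r\<in>V. 0 \<le> w r" using nn Mpos by (auto simp: w_def)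
  have massw: "mass V w (\<lambda>r. prefers r c y) = M * f y" for y
    unfolding w_def f_def lam_def by (rule mass_scale)
  have cond: "\<forall>j<length ys. mass V w (\<lambda>r. prefers r c (ys!j)) \<ge> real j + 1"
  proof (intro allI impI)
    fix j assume j: "j < length ys"
    show "mass V w (\<lambda>r. prefers r c (ys!j)) \<ge> real j + 1"
    proof (rule ccontr)
      assume "\<not> ?thesis"
      then have lt: "f (ys!j) * M < real (Suc j)" using massw by (simp add: mult.commute)
      define Y where "Y = set (take (Suc j) ys)"
      have cardY: "card Y = Suc j" unfolding Y_def using dys j
        by (simp add: distinct_card min_def)
      have "set (take (Suc j) ys) \<subseteq> set ys" by (rule set_take_subset)
      then have YD: "Y \<subseteq> D - {c}" unfolding Y_def sys .
      have small: "\<forall>y\<in>Y. lam V \<rho> c y * real (N choose 2) < real (Suc j)"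
      proof
        fix y assume "y \<in> Y"
        then obtain i where i: "i < length (take (Suc j) ys)" "take (Suc j) ys ! i = y"
          unfolding Y_def by (auto simp: in_set_conv_nth)
        then have ij: "i \<le> j" and yi: "y = ys ! i" using j by auto
        have "(map f ys) ! i \<le> (map f ys) ! j"
          using sorted_nth_mono[OF srt ij] j by simp
        then have "f y \<le> f (ys ! j)" using yi ij j by simp
        then have "f y * M \<le> f (ys ! j) * M" using Mpos by (intro mult_right_mono) auto
        then have "f y * M < real (Suc j)" using lt by linarith
        then show "lam V \<rho> c y * real (N choose 2) < real (Suc j)"
          unfolding f_def M_def .
      qed
      show False
        using borda_key[OF V fin DC N nn s cD cmax YD cardY _ small] by simp
    qed
  qed
  obtain \<phi> where p1: "\<forall>y\<in>set ys. \<forall>r\<in>V. 0 \<le> \<phi> y r"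
    and p2: "\<forall>y\<in>set ys. \<forall>r\<in>V. \<not> prefers r c y \<longrightarrow> \<phi> y r = 0"
    and p3: "\<forall>y\<in>set ys. (\<Sum>r\<in>V. \<phi> y r) = 1" and p4: "\<forall>r\<in>V. (\<Sum>y\<in>set ys. \<phi> y r) \<le> w r"
    using alloc_lemma[OF _ w0 dys, of "\<lambda>y r. prefers r c y"] cond V by auto
  have q4: "\<forall>r\<in>V. (\<Sum>y\<in>D-{c}. \<phi> y r) \<le> real (N choose 2) * \<rho> r"
    using p4 unfolding sys w_def M_def .
  have q1: "\<forall>y\<in>D-{c}. \<forall>r\<in>V. 0 \<le> \<phi> y r" using p1 unfolding sys .
  have q2: "\<forall>y\<in>D-{c}. \<forall>r\<in>V. \<not> prefers r c y \<longrightarrow> \<phi> y r = 0" using p2 unfolding sys .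
  have q3: "\<forall>y\<in>D-{c}. (\<Sum>r\<in>V. \<phi> y r) = 1" using p3 unfolding sys .
  show ?thesis
    by (rule bexI[OF _ cD], rule exI[of _ \<phi>]) (intro conjI q1 q2 q3 q4)
qed

definition good :: "'a list set \<Rightarrow> ('a list \<Rightarrow> real) \<Rightarrow> 'a set \<Rightarrow> 'a \<Rightarrow> bool" where
  "good V \<rho> D c \<longleftrightarrow> (\<forall>u\<in>D-{c}. lam V \<rho> c u \<ge> 1/3) \<and> mass V \<rho> (\<lambda>r. \<exists>u\<in>D-{c}. prefers r c u) \<ge> 2/3"

lemma crush:
  assumes V: "V = permutations_of_set C" and D: "D = {x, y, z}" and dist: "x \<noteq> y" "y \<noteq> z" "x \<noteq> z"
    and DC: "D \<subseteq> C" and nn: "\<forall>r\<in>V. 0 \<le> \<rho> r" and s: "(\<Sum>r\<in>V. \<rho> r) = 1"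
    and Lx: "mass V \<rho> (\<lambda>r. prefers r y x \<and> prefers r z x) \<le> 1/3"
    and lxy: "lam V \<rho> x y < 1/3"
  shows "good V \<rho> D y"
proof -
  have xC: "x \<in> C" and yC: "y \<in> C" and zC: "z \<in> C" using D DC by auto
  have Dy: "D - {y} = {x, z}" using D dist by auto
  have l1: "lam V \<rho> y x > 2/3" using lam_sum1[OF V xC yC dist(1) s] lxy by linarith
  have g2: "lam V \<rho> y z \<ge> 1/3"
  proof (rule ccontr)
    assume "\<not> ?thesis"
    then have lzy: "lam V \<rho> z y > 2/3" using lam_sum1[OF V yC zC dist(2) s] by linarith
    have "mass V \<rho> (\<lambda>r. prefers r z y \<and> prefers r y x) \<ge> lam V \<rho> z y + lam V \<rho> y x - 1"
      using mass_and[OF nn, of "\<lambda>r. prefers r z y" "\<lambda>r. prefers r y x"] s unfolding lam_def by simp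
    moreover have "mass V \<rho> (\<lambda>r. prefers r z y \<and> prefers r y x) \<le> mass V \<rho> (\<lambda>r. prefers r y x \<and> prefers r z x)"
    proof (rule mass_mono[OF nn], intro ballI impI)
      fix r assume "r \<in> V" and h: "prefers r z y \<and> prefers r y x"
      then have d: "distinct r" using V permutations_of_setD by auto
      have "prefers r z x" using prefers_trans[OF d, of z y x] h by simp
      then show "prefers r y x \<and> prefers r z x" using h by simp
    qed
    ultimately show False using Lx lzy l1 by linarith
  qed
  have g3: "mass V \<rho> (\<lambda>r. \<exists>u\<in>D-{y}. prefers r y u) \<ge> lam V \<rho> y x"
    unfolding lam_def
  proof (rule mass_mono[OF nn], intro ballI impI)
    fix r assume "r \<in> V" "prefers r y x"
    moreover have "x \<in> D - {y}" using Dy by auto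
    ultimately show "\<exists>u\<in>D-{y}. prefers r y u" by blast
  qed
  show ?thesis unfolding good_def using l1 g2 g3 Dy by auto
qed

lemma one_case:
  assumes V: "V = permutations_of_set C" and D: "D = {x, y, z}" and dist: "x \<noteq> y" "y \<noteq> z" "x \<noteq> z"
    and DC: "D \<subseteq> C" and nn: "\<forall>r\<in>V. 0 \<le> \<rho> r" and s: "(\<Sum>r\<in>V. \<rho> r) = 1"
    and Lx: "mass V \<rho> (\<lambda>r. prefers r y x \<and> prefers r z x) \<le> 1/3"
  shows "\<exists>c\<in>D. good V \<rho> D c"
proof (cases "lam V \<rho> x y \<ge> 1/3 \<and> lam V \<rho> x z \<ge> 1/3")
  case True
  have xC: "x \<in> C" and yC: "y \<in> C" and zC: "z \<in> C" using D DC by auto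
  have Dx: "D - {x} = {y, z}" using D dist by auto
  have "mass V \<rho> (\<lambda>r. prefers r y x \<and> prefers r z x) + mass V \<rho> (\<lambda>r. \<exists>u\<in>D-{x}. prefers r x u) \<ge> 1"
  proof -
    have "(\<Sum>r\<in>V. \<rho> r * 1) \<le> (\<Sum>r\<in>V. \<rho> r * (ind (prefers r y x \<and> prefers r z x) + ind (\<exists>u\<in>D-{x}. prefers r x u)))"
    proof (rule sum_mono)
      fix r assume r: "r \<in> V"
      then have sr: "set r = C" using V permutations_of_setD by auto
      have "1 \<le> ind (prefers r y x \<and> prefers r z x) + ind (\<exists>u\<in>D-{x}. prefers r x u)"
        using prefers_total[of x r y] prefers_total[of x r z] xC yC zC sr dist Dx
        by (auto simp: ind_def)
      then show "\<rho> r * 1 \<le> \<rho> r * (ind (prefers r y x \<and> prefers r z x) + ind (\<exists>u\<in>D-{x}. prefers r x u))"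
        using nn r by (intro mult_left_mono) auto
    qed
    then show ?thesis using s unfolding mass_ind by (simp add: sum.distrib distrib_left)
  qed
  then have "good V \<rho> D x" unfolding good_def using True Lx Dx by auto
  then show ?thesis using D by auto
next
  case False
  then show ?thesis
  proof (cases "lam V \<rho> x y < 1/3")
    case True
    then have "good V \<rho> D y" using crush[OF V D dist DC nn s Lx] by auto
    then show ?thesis using D by auto
  next
    case False2: False
    then have lxz: "lam V \<rho> x z < 1/3" using False by auto
    have D': "D = {x, z, y}" using D by auto
    have Lx': "mass V \<rho> (\<lambda>r. prefers r z x \<and> prefers r y x) \<le> 1/3"
      using Lx by (simp add: conj_commute)
    have "good V \<rho> D z" using crush[OF V D' _ _ _ _ nn s Lx' lxz] dist DC D by auto
    then show ?thesis using D by auto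
  qed
qed

lemma three_exists:
  assumes V: "V = permutations_of_set C" and D: "D = {x, y, z}" and dist: "x \<noteq> y" "y \<noteq> z" "x \<noteq> z"
    and DC: "D \<subseteq> C" and nn: "\<forall>r\<in>V. 0 \<le> \<rho> r" and s: "(\<Sum>r\<in>V. \<rho> r) = 1"
  shows "\<exists>c\<in>D. good V \<rho> D c"
proof -
  define Lx where "Lx = mass V \<rho> (\<lambda>r. prefers r y x \<and> prefers r z x)"
  define Ly where "Ly = mass V \<rho> (\<lambda>r. prefers r x y \<and> prefers r z y)"
  define Lz where "Lz = mass V \<rho> (\<lambda>r. prefers r x z \<and> prefers r y z)"
  have "Lx + Ly + Lz \<le> (\<Sum>r\<in>V. \<rho> r * 1)"
  proof -
    have "Lx + Ly + Lz = (\<Sum>r\<in>V. \<rho> r * (ind (prefers r y x \<and> prefers r z x) + ind (prefers r x y \<and> prefers r z y) + ind (prefers r x z \<and> prefers r y z)))"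
      unfolding Lx_def Ly_def Lz_def mass_ind by (simp add: sum.distrib distrib_left)
    also have "\<dots> \<le> (\<Sum>r\<in>V. \<rho> r * 1)"
    proof (rule sum_mono)
      fix r assume r: "r \<in> V"
      then have d: "distinct r" using V permutations_of_setD by auto
      have "ind (prefers r y x \<and> prefers r z x) + ind (prefers r x y \<and> prefers r z y) + ind (prefers r x z \<and> prefers r y z) \<le> 1"
        using prefers_asym[OF d, of x y] prefers_asym[OF d, of x z] prefers_asym[OF d, of y z]
        by (auto simp: ind_def)
      then show "\<rho> r * (ind (prefers r y x \<and> prefers r z x) + ind (prefers r x y \<and> prefers r z y) + ind (prefers r x z \<and> prefers r y z)) \<le> \<rho> r * 1"
        using nn r by (intro mult_left_mono) auto
    qed
    finally show ?thesis .
  qed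
  then have sum3: "Lx + Ly + Lz \<le> 1" using s by simp
  show ?thesis
  proof (cases "Lx \<le> 1/3")
    case True
    then show ?thesis using one_case[OF V D dist DC nn s] Lx_def by auto
  next
    case F1: False
    show ?thesis
    proof (cases "Ly \<le> 1/3")
      case True
      have D': "D = {y, x, z}" using D by auto
      show ?thesis using one_case[OF V D' _ _ _ DC nn s, of ] True Ly_def dist by auto
    next
      case False
      then have "Lz \<le> 1/3" using F1 sum3 by linarith
      moreover have D': "D = {z, x, y}" using D by auto
      ultimately show ?thesis using one_case[OF V D' _ _ _ DC nn s] Lz_def dist by auto
    qed
  qed
qed

lemma star_three:
  fixes C :: "'a set" and \<rho> :: "'a list \<Rightarrow> real"
  assumes V: "V = permutations_of_set C" and fin: "finite C" and DC: "D \<subseteq> C"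
    and N: "card D = 3"
    and nn: "\<forall>r\<in>V. 0 \<le> \<rho> r" and s: "(\<Sum>r\<in>V. \<rho> r) = 1"
  shows "\<exists>c\<in>D. \<exists>\<psi>. (\<forall>y\<in>D-{c}. \<forall>r\<in>V. 0 \<le> \<psi> y r) \<and> (\<forall>y\<in>D-{c}. \<forall>r\<in>V. \<not> prefers r c y \<longrightarrow> \<psi> y r = 0)
     \<and> (\<forall>y\<in>D-{c}. (\<Sum>r\<in>V. \<psi> y r) = 1) \<and> (\<forall>r\<in>V. (\<Sum>y\<in>D-{c}. \<psi> y r) \<le> real (3 choose 2) * \<rho> r)"
proof -
  obtain x y z where D: "D = {x, y, z}" and dist: "x \<noteq> y" "y \<noteq> z" "x \<noteq> z"
    using N card_3_iff by metis
  obtain c where cD: "c \<in> D" and gc: "good V \<rho> D c" using three_exists[OF V D dist DC nn s] by blast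
  have finD: "finite D" using D by simp
  have "card (D - {c}) = 2" using N cD finD by simp
  then obtain y1 y2 where Dc: "D - {c} = {y1, y2}" and y12: "y1 \<noteq> y2" using card_2_iff by metis
  have finV: "finite V" using V by simp
  define w where "w r = 3 * \<rho> r" for r
  have w0: "\<forall>r\<in>V. 0 \<le> w r" using nn by (simp add: w_def)
  have m1: "mass V w (\<lambda>r. prefers r c y1) \<ge> 1"
    using gc Dc unfolding good_def w_def mass_scale lam_def by auto
  have m2: "mass V w (\<lambda>r. prefers r c y2) \<ge> 1"
    using gc Dc unfolding good_def w_def mass_scale lam_def by auto
  have eqf: "(\<lambda>r. \<exists>u\<in>D-{c}. prefers r c u) = (\<lambda>r. prefers r c y1 \<or> prefers r c y2)"
    unfolding Dc by auto
  have m12: "mass V w (\<lambda>r. prefers r c y1 \<or> prefers r c y2) \<ge> 2"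
    using gc unfolding good_def w_def mass_scale eqf by auto
  obtain f g where fg1: "\<forall>r\<in>V. 0 \<le> f r \<and> 0 \<le> g r \<and> f r + g r \<le> w r"
    and fg2: "\<forall>r\<in>V. \<not> prefers r c y1 \<longrightarrow> f r = 0" and fg3: "\<forall>r\<in>V. \<not> prefers r c y2 \<longrightarrow> g r = 0"
    and fg4: "(\<Sum>r\<in>V. f r) = 1" and fg5: "(\<Sum>r\<in>V. g r) = 1"
    using twoset_lemma[OF finV w0 m1 m2 m12] by blast
  define \<psi> where "\<psi> u r = (if u = y1 then f r else g r)" for u r
  have c32: "real (3 choose 2) = 3" by (simp add: numeral_3_eq_3 numeral_2_eq_2)
  have q1: "\<forall>u\<in>D-{c}. \<forall>r\<in>V. 0 \<le> \<psi> u r" using fg1 by (auto simp: \<psi>_def)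
  have q2: "\<forall>u\<in>D-{c}. \<forall>r\<in>V. \<not> prefers r c u \<longrightarrow> \<psi> u r = 0"
    using fg2 fg3 y12 unfolding Dc by (auto simp: \<psi>_def)
  have q3: "\<forall>u\<in>D-{c}. (\<Sum>r\<in>V. \<psi> u r) = 1"
    using fg4 fg5 y12 unfolding Dc by (auto simp: \<psi>_def)
  have q4: "\<forall>r\<in>V. (\<Sum>u\<in>D-{c}. \<psi> u r) \<le> real (3 choose 2) * \<rho> r"
    using fg1 y12 unfolding Dc c32 by (auto simp: \<psi>_def w_def)
  show ?thesis
    by (rule bexI[OF _ cD], rule exI[of _ \<psi>]) (intro conjI q1 q2 q3 q4)
qed

definition PP :: "'a list set \<Rightarrow> 'a set \<Rightarrow> ('a list \<Rightarrow> real) \<Rightarrow> nat \<Rightarrow> bool" where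
  "PP V D \<rho> n \<longleftrightarrow> (\<exists>rr\<in>permutations_of_set D. \<exists>\<pi>.
     (\<forall>r\<in>V. \<forall>p\<in>A_pairs rr. 0 \<le> \<pi> r p) \<and>
     (\<forall>r\<in>V. \<forall>p\<in>A_pairs rr. \<not> prefers r (fst p) (snd p) \<longrightarrow> \<pi> r p = 0) \<and>
     (\<forall>r\<in>V. (\<Sum>p\<in>A_pairs rr. \<pi> r p) \<le> real (n choose 2) * \<rho> r) \<and>
     (\<forall>p\<in>A_pairs rr. (\<Sum>r\<in>V. \<pi> r p) \<le> 1) \<and>
     (\<Sum>r\<in>V. \<Sum>p\<in>A_pairs rr. \<pi> r p) > real (n choose 2) - 1)"

lemma A_pairs_finite: "finite (A_pairs rr)"
proof -
  have "A_pairs rr \<subseteq> set rr \<times> set rr" unfolding A_pairs_def by (auto dest: prefers_set)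
  then show ?thesis by (rule finite_subset) simp
qed

lemma A_pairs_Cons: "A_pairs (c # l) = Pair c ` set l \<union> A_pairs l"
  unfolding A_pairs_def by (auto simp: prefers_Cons)

lemma base_case:
  fixes C :: "'a set" and \<rho> :: "'a list \<Rightarrow> real"
  assumes V: "V = permutations_of_set C" and DC: "D \<subseteq> C" and N: "card D = 2"
    and nn: "\<forall>r\<in>V. 0 \<le> \<rho> r" and s: "(\<Sum>r\<in>V. \<rho> r) = 1"
  shows "PP V D \<rho> 2"
proof -
  obtain a b where D: "D = {a, b}" and ab: "a \<noteq> b" using N card_2_iff by metis
  have finV: "finite V" using V by simp
  obtain r0 where r0: "r0 \<in> V" "\<rho> r0 > 0"
  proof (rule ccontr)
    assume "\<not> thesis"
    then have "\<forall>r\<in>V. \<rho> r \<le> 0" using that by force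
    then have "(\<Sum>r\<in>V. \<rho> r) \<le> 0" by (intro sum_nonpos) auto
    then show False using s by simp
  qed
  have sr0: "set r0 = C" using r0 V permutations_of_setD by auto
  have "prefers r0 a b \<or> prefers r0 b a" using prefers_total[of a r0 b] sr0 DC D ab by auto
  then obtain x y where xy: "D = {x, y}" "x \<noteq> y" "prefers r0 x y" using D ab by auto
  define rr where "rr = [x, y]"
  have rrP: "rr \<in> permutations_of_set D" using xy unfolding rr_def by auto
  have Arr: "A_pairs rr = {(x, y)}" unfolding A_pairs_def rr_def prefers_two by auto
  define \<pi> where "\<pi> r p = (if r = r0 then \<rho> r0 else 0)" for r :: "'a list" and p :: "'a \<times> 'a"
  have c22: "real (2 choose 2) = 1" by simp
  have le1: "\<rho> r0 \<le> 1" using member_le_sum[OF r0(1), of \<rho>] nn finV s by auto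
  have sum0: "(\<Sum>r\<in>V. \<pi> r (x, y)) = \<rho> r0" unfolding \<pi>_def using r0 finV by (simp add: sum.delta')
  show ?thesis unfolding PP_def
  proof (rule bexI[OF _ rrP], rule exI[of _ \<pi>], intro conjI)
    show "\<forall>r\<in>V. \<forall>p\<in>A_pairs rr. 0 \<le> \<pi> r p" using r0 by (auto simp: \<pi>_def)
    show "\<forall>r\<in>V. \<forall>p\<in>A_pairs rr. \<not> prefers r (fst p) (snd p) \<longrightarrow> \<pi> r p = 0"
      using xy by (auto simp: \<pi>_def Arr)
    show "\<forall>r\<in>V. (\<Sum>p\<in>A_pairs rr. \<pi> r p) \<le> real (2 choose 2) * \<rho> r"
      using nn by (auto simp: \<pi>_def Arr)
    show "\<forall>p\<in>A_pairs rr. (\<Sum>r\<in>V. \<pi> r p) \<le> 1" using sum0 le1 by (simp add: Arr)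
    show "(\<Sum>r\<in>V. \<Sum>p\<in>A_pairs rr. \<pi> r p) > real (2 choose 2) - 1" using sum0 r0 by (simp add: Arr)
  qed
qed

lemma step_case:
  fixes C :: "'a set" and \<rho> :: "'a list \<Rightarrow> real"
  assumes V: "V = permutations_of_set C" and fin: "finite C" and DC: "D \<subseteq> C" and N: "card D = Suc n"
    and n2: "2 \<le> n"
    and nn: "\<forall>r\<in>V. 0 \<le> \<rho> r" and s: "(\<Sum>r\<in>V. \<rho> r) = 1"
    and IH: "\<forall>D' \<rho>'. D' \<subseteq> C \<longrightarrow> card D' = n \<longrightarrow> (\<forall>r\<in>V. 0 \<le> \<rho>' r) \<longrightarrow> (\<Sum>r\<in>V. \<rho>' r) = 1 \<longrightarrow> PP V D' \<rho>' n"
  shows "PP V D \<rho> (Suc n)"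
proof -
  have finV: "finite V" using V by simp
  have finD: "finite D" using fin DC finite_subset by auto
  have "\<exists>c\<in>D. \<exists>\<psi>. (\<forall>y\<in>D-{c}. \<forall>r\<in>V. 0 \<le> \<psi> y r) \<and> (\<forall>y\<in>D-{c}. \<forall>r\<in>V. \<not> prefers r c y \<longrightarrow> \<psi> y r = 0)
     \<and> (\<forall>y\<in>D-{c}. (\<Sum>r\<in>V. \<psi> y r) = 1) \<and> (\<forall>r\<in>V. (\<Sum>y\<in>D-{c}. \<psi> y r) \<le> real (Suc n choose 2) * \<rho> r)"
  proof (cases "Suc n = 3")
    case True
    have c3: "card D = 3" using N True by simp
    show ?thesis unfolding True using star_three[OF V fin DC c3 nn s] .
  next
    case False
    then have "Suc n \<ge> 4" using n2 by simp
    then show ?thesis by (rule star_big[OF V fin DC N _ nn s])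
  qed
  then obtain c \<psi> where cD: "c \<in> D" and q1: "\<forall>y\<in>D-{c}. \<forall>r\<in>V. 0 \<le> \<psi> y r"
    and q2: "\<forall>y\<in>D-{c}. \<forall>r\<in>V. \<not> prefers r c y \<longrightarrow> \<psi> y r = 0"
    and q3: "\<forall>y\<in>D-{c}. (\<Sum>r\<in>V. \<psi> y r) = 1"
    and q4: "\<forall>r\<in>V. (\<Sum>y\<in>D-{c}. \<psi> y r) \<le> real (Suc n choose 2) * \<rho> r"
    by (elim bexE exE conjE) (rule that)
  define M where "M = real (Suc n choose 2)"
  define M' where "M' = real (n choose 2)"
  have MM: "M = real n + M'" unfolding M_def M'_def by (simp add: choose_Suc2)
  have "2 * M' = real n * (real n - 1)" unfolding M'_def by (rule choose2_real)
  moreover have "real n * (real n - 1) > 0" using n2 by (intro mult_pos_pos) auto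
  ultimately have M'pos: "M' > 0" by linarith
  define \<rho>' where "\<rho>' r = (M * \<rho> r - (\<Sum>y\<in>D-{c}. \<psi> y r)) / M'" for r
  have nn': "\<forall>r\<in>V. 0 \<le> \<rho>' r" using q4 M'pos unfolding \<rho>'_def M_def by auto
  have cardDc: "card (D - {c}) = n" using N cD finD by simp
  have sumpsi: "(\<Sum>r\<in>V. \<Sum>y\<in>D-{c}. \<psi> y r) = real n"
  proof -
    have "(\<Sum>r\<in>V. \<Sum>y\<in>D-{c}. \<psi> y r) = (\<Sum>y\<in>D-{c}. \<Sum>r\<in>V. \<psi> y r)" by (rule sum.swap)
    also have "\<dots> = (\<Sum>y\<in>D-{c}. 1)" using q3 by simp
    also have "\<dots> = real n" using cardDc by simp
    finally show ?thesis .
  qed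
  have num: "(\<Sum>r\<in>V. M * \<rho> r - (\<Sum>y\<in>D-{c}. \<psi> y r)) = M - real n"
  proof -
    have "(\<Sum>r\<in>V. M * \<rho> r - (\<Sum>y\<in>D-{c}. \<psi> y r)) = M * (\<Sum>r\<in>V. \<rho> r) - (\<Sum>r\<in>V. \<Sum>y\<in>D-{c}. \<psi> y r)"
      by (simp only: sum_subtractf sum_distrib_left)
    then show ?thesis using s sumpsi by simp
  qed
  have s': "(\<Sum>r\<in>V. \<rho>' r) = 1"
  proof -
    have "(\<Sum>r\<in>V. \<rho>' r) = (\<Sum>r\<in>V. M * \<rho> r - (\<Sum>y\<in>D-{c}. \<psi> y r)) / M'"
      unfolding \<rho>'_def by (simp add: sum_divide_distrib)
    then show ?thesis using num MM M'pos by simp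
  qed
  have DcC: "D - {c} \<subseteq> C" using DC by auto
  have PPd: "PP V (D - {c}) \<rho>' n"
    by (rule IH[rule_format, OF DcC cardDc _ s']) (use nn' in auto)
  then obtain rr' where rr': "rr' \<in> permutations_of_set (D - {c})"
    and ex: "\<exists>\<pi>'. (\<forall>r\<in>V. \<forall>p\<in>A_pairs rr'. 0 \<le> \<pi>' r p) \<and>
     (\<forall>r\<in>V. \<forall>p\<in>A_pairs rr'. \<not> prefers r (fst p) (snd p) \<longrightarrow> \<pi>' r p = 0) \<and>
     (\<forall>r\<in>V. (\<Sum>p\<in>A_pairs rr'. \<pi>' r p) \<le> real (n choose 2) * \<rho>' r) \<and>
     (\<forall>p\<in>A_pairs rr'. (\<Sum>r\<in>V. \<pi>' r p) \<le> 1) \<and>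
     (\<Sum>r\<in>V. \<Sum>p\<in>A_pairs rr'. \<pi>' r p) > real (n choose 2) - 1"
    unfolding PP_def by (rule bexE)
  from ex obtain \<pi>' where conj: "(\<forall>r\<in>V. \<forall>p\<in>A_pairs rr'. 0 \<le> \<pi>' r p) \<and>
     (\<forall>r\<in>V. \<forall>p\<in>A_pairs rr'. \<not> prefers r (fst p) (snd p) \<longrightarrow> \<pi>' r p = 0) \<and>
     (\<forall>r\<in>V. (\<Sum>p\<in>A_pairs rr'. \<pi>' r p) \<le> real (n choose 2) * \<rho>' r) \<and>
     (\<forall>p\<in>A_pairs rr'. (\<Sum>r\<in>V. \<pi>' r p) \<le> 1) \<and>
     (\<Sum>r\<in>V. \<Sum>p\<in>A_pairs rr'. \<pi>' r p) > real (n choose 2) - 1"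
    by (rule exE)
  have p1: "\<forall>r\<in>V. \<forall>p\<in>A_pairs rr'. 0 \<le> \<pi>' r p" using conj by (elim conjE)
  have p2: "\<forall>r\<in>V. \<forall>p\<in>A_pairs rr'. \<not> prefers r (fst p) (snd p) \<longrightarrow> \<pi>' r p = 0" using conj by (elim conjE)
  have p3: "\<forall>r\<in>V. (\<Sum>p\<in>A_pairs rr'. \<pi>' r p) \<le> real (n choose 2) * \<rho>' r" using conj by (elim conjE)
  have p4: "\<forall>p\<in>A_pairs rr'. (\<Sum>r\<in>V. \<pi>' r p) \<le> 1" using conj by (elim conjE)
  have p5: "(\<Sum>r\<in>V. \<Sum>p\<in>A_pairs rr'. \<pi>' r p) > real (n choose 2) - 1" using conj by (elim conjE)
  have srr': "set rr' = D - {c}" and drr': "distinct rr'" using permutations_of_setD[OF rr'] by auto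
  define rr where "rr = c # rr'"
  have setrr: "set rr = D" unfolding rr_def using srr' cD by auto
  have distrr: "distinct rr" unfolding rr_def using srr' drr' by simp
  have rrP: "rr \<in> permutations_of_set D" using setrr distrr by (rule permutations_of_setI)
  define S1 where "S1 = Pair c ` (D - {c})"
  have Arr: "A_pairs rr = S1 \<union> A_pairs rr'" unfolding rr_def S1_def A_pairs_Cons srr' ..
  have fst2: "\<forall>p\<in>A_pairs rr'. fst p \<noteq> c"
  proof
    fix p assume "p \<in> A_pairs rr'"
    then have "prefers rr' (fst p) (snd p)" unfolding A_pairs_def by (cases p) auto
    then have "fst p \<in> set rr'" using prefers_set[of rr' "fst p" "snd p"] by simp
    then show "fst p \<noteq> c" using srr' by auto
  qed
  have disj: "S1 \<inter> A_pairs rr' = {}" using fst2 unfolding S1_def by auto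
  have finS1: "finite S1" unfolding S1_def using finD by simp
  define \<pi> where "\<pi> r p = (if fst p = c then \<psi> (snd p) r else \<pi>' r p)" for r p
  have sumS1: "(\<Sum>p\<in>S1. \<pi> r p) = (\<Sum>y\<in>D-{c}. \<psi> y r)" for r
    unfolding S1_def by (subst sum.reindex) (auto simp: inj_on_def \<pi>_def)
  have sumS2: "(\<Sum>p\<in>A_pairs rr'. \<pi> r p) = (\<Sum>p\<in>A_pairs rr'. \<pi>' r p)" for r
    using fst2 by (intro sum.cong) (auto simp: \<pi>_def)
  have sumA: "(\<Sum>p\<in>A_pairs rr. \<pi> r p) = (\<Sum>y\<in>D-{c}. \<psi> y r) + (\<Sum>p\<in>A_pairs rr'. \<pi>' r p)" for r
    by (simp only: Arr sum.union_disjoint[OF finS1 A_pairs_finite disj] sumS1 sumS2)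
  show ?thesis unfolding PP_def
  proof (rule bexI[OF _ rrP], rule exI[of _ \<pi>], intro conjI)
    show "\<forall>r\<in>V. \<forall>p\<in>A_pairs rr. 0 \<le> \<pi> r p"
      using q1 p1 fst2 unfolding Arr S1_def by (auto simp: \<pi>_def)
    show "\<forall>r\<in>V. \<forall>p\<in>A_pairs rr. \<not> prefers r (fst p) (snd p) \<longrightarrow> \<pi> r p = 0"
      using q2 p2 fst2 unfolding Arr S1_def by (auto simp: \<pi>_def)
    show "\<forall>r\<in>V. (\<Sum>p\<in>A_pairs rr. \<pi> r p) \<le> real (Suc n choose 2) * \<rho> r"
    proof
      fix r assume r: "r \<in> V"
      have "(\<Sum>p\<in>A_pairs rr'. \<pi>' r p) \<le> M' * \<rho>' r" using p3 r unfolding M'_def by auto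
      also have "M' * \<rho>' r = M * \<rho> r - (\<Sum>y\<in>D-{c}. \<psi> y r)" unfolding \<rho>'_def using M'pos by simp
      finally show "(\<Sum>p\<in>A_pairs rr. \<pi> r p) \<le> real (Suc n choose 2) * \<rho> r"
        unfolding sumA M_def by simp
    qed
    show "\<forall>p\<in>A_pairs rr. (\<Sum>r\<in>V. \<pi> r p) \<le> 1"
    proof
      fix p assume "p \<in> A_pairs rr"
      then consider (a) "p \<in> S1" | (b) "p \<in> A_pairs rr'" unfolding Arr by blast
      then show "(\<Sum>r\<in>V. \<pi> r p) \<le> 1"
      proof cases
        case a
        then obtain y where y: "y \<in> D - {c}" "p = (c, y)" unfolding S1_def by auto
        then show ?thesis using q3 by (simp add: \<pi>_def)
      next
        case b
        then have "(\<Sum>r\<in>V. \<pi> r p) = (\<Sum>r\<in>V. \<pi>' r p)" using fst2 by (simp add: \<pi>_def)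
        then show ?thesis using p4 b by simp
      qed
    qed
    show "(\<Sum>r\<in>V. \<Sum>p\<in>A_pairs rr. \<pi> r p) > real (Suc n choose 2) - 1"
    proof -
      have "(\<Sum>r\<in>V. \<Sum>p\<in>A_pairs rr. \<pi> r p) = real n + (\<Sum>r\<in>V. \<Sum>p\<in>A_pairs rr'. \<pi>' r p)"
        unfolding sumA sum.distrib sumpsi ..
      then show ?thesis using p5 MM unfolding M_def M'_def by simp
    qed
  qed
qed

lemma gen:
  fixes C :: "'a set"
  assumes fin: "finite C" and V: "V = permutations_of_set C" and n2: "2 \<le> n"
  shows "\<forall>D (\<rho>::'a list \<Rightarrow> real). D \<subseteq> C \<longrightarrow> card D = n \<longrightarrow> (\<forall>r\<in>V. 0 \<le> \<rho> r) \<longrightarrow> (\<Sum>r\<in>V. \<rho> r) = 1 \<longrightarrow> PP V D \<rho> n"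
  using n2
proof (induction n rule: nat_induct_at_least)
  case base
  show ?case
  proof (intro allI impI)
    fix D and \<rho> :: "'a list \<Rightarrow> real" assume "D \<subseteq> C" "card D = 2" "\<forall>r\<in>V. 0 \<le> \<rho> r" "(\<Sum>r\<in>V. \<rho> r) = 1"
    then show "PP V D \<rho> 2" by (rule base_case[OF V])
  qed
next
  case (Suc n)
  show ?case
  proof (intro allI impI)
    fix D and \<rho> :: "'a list \<Rightarrow> real" assume a: "D \<subseteq> C" "card D = Suc n" "\<forall>r\<in>V. 0 \<le> \<rho> r" "(\<Sum>r\<in>V. \<rho> r) = 1"
    show "PP V D \<rho> (Suc n)" by (rule step_case[OF V fin a(1) a(2) Suc.hyps a(3) a(4) Suc.IH])
  qed
qed

lemma u_pair: "x \<noteq> y \<Longrightarrow> u r x {x, y} = (if prefers r x y then 1 else 0)"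
proof -
  assume xy: "x \<noteq> y"
  have "{y' \<in> {x, y} - {x}. prefers r x y'} = (if prefers r x y then {y} else {})"
    using xy by auto
  then show ?thesis unfolding u_def by simp
qed

theorem mainTheorem10:
  fixes C :: "'a set" and R :: "'a list \<Rightarrow> real"
  assumes "finite C" and "card C \<ge> 2" and "ranking_profile C R"
  shows "\<exists>rr \<in> rankings C. pair_priceable C R rr"
proof -
  define V where "V = permutations_of_set C"
  have RV: "rankings C = V" unfolding rankings_def V_def ..
  have nn: "\<forall>r\<in>V. 0 \<le> R r" and s: "(\<Sum>r\<in>V. R r) = 1"
    using assms(3) unfolding ranking_profile_def RV by auto
  have finV: "finite V" unfolding V_def by simp
  have "PP V C R (card C)"
    using gen[OF assms(1) V_def assms(2)] nn s by blast
  then obtain rr where rr: "rr \<in> permutations_of_set C"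
    and ex: "\<exists>\<pi>. (\<forall>r\<in>V. \<forall>p\<in>A_pairs rr. 0 \<le> \<pi> r p) \<and>
     (\<forall>r\<in>V. \<forall>p\<in>A_pairs rr. \<not> prefers r (fst p) (snd p) \<longrightarrow> \<pi> r p = 0) \<and>
     (\<forall>r\<in>V. (\<Sum>p\<in>A_pairs rr. \<pi> r p) \<le> real (card C choose 2) * R r) \<and>
     (\<forall>p\<in>A_pairs rr. (\<Sum>r\<in>V. \<pi> r p) \<le> 1) \<and>
     (\<Sum>r\<in>V. \<Sum>p\<in>A_pairs rr. \<pi> r p) > real (card C choose 2) - 1"
    unfolding PP_def by (rule bexE)
  from ex obtain \<pi> where conj: "(\<forall>r\<in>V. \<forall>p\<in>A_pairs rr. 0 \<le> \<pi> r p) \<and>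
     (\<forall>r\<in>V. \<forall>p\<in>A_pairs rr. \<not> prefers r (fst p) (snd p) \<longrightarrow> \<pi> r p = 0) \<and>
     (\<forall>r\<in>V. (\<Sum>p\<in>A_pairs rr. \<pi> r p) \<le> real (card C choose 2) * R r) \<and>
     (\<forall>p\<in>A_pairs rr. (\<Sum>r\<in>V. \<pi> r p) \<le> 1) \<and>
     (\<Sum>r\<in>V. \<Sum>p\<in>A_pairs rr. \<pi> r p) > real (card C choose 2) - 1"
    by (rule exE)
  have p1: "\<forall>r\<in>V. \<forall>p\<in>A_pairs rr. 0 \<le> \<pi> r p" using conj by (elim conjE)
  have p2: "\<forall>r\<in>V. \<forall>p\<in>A_pairs rr. \<not> prefers r (fst p) (snd p) \<longrightarrow> \<pi> r p = 0" using conj by (elim conjE)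
  have p3: "\<forall>r\<in>V. (\<Sum>p\<in>A_pairs rr. \<pi> r p) \<le> real (card C choose 2) * R r" using conj by (elim conjE)
  have p4: "\<forall>p\<in>A_pairs rr. (\<Sum>r\<in>V. \<pi> r p) \<le> 1" using conj by (elim conjE)
  have p5: "(\<Sum>r\<in>V. \<Sum>p\<in>A_pairs rr. \<pi> r p) > real (card C choose 2) - 1" using conj by (elim conjE)
  have drr: "distinct rr" using permutations_of_setD(2)[OF rr] .
  have le1: "\<forall>r\<in>V. \<forall>p\<in>A_pairs rr. \<pi> r p \<le> 1"
  proof (intro ballI)
    fix r p assume r: "r \<in> V" and p: "p \<in> A_pairs rr"
    have "\<pi> r p \<le> (\<Sum>r'\<in>V. \<pi> r' p)"
      by (rule member_le_sum[OF r]) (use p1 p finV in auto)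
    then show "\<pi> r p \<le> 1" using p4 p by fastforce
  qed
  have c2: "\<forall>r\<in>V. \<forall>(x, y)\<in>A_pairs rr. \<pi> r (x, y) \<le> real (u r x {x, y})"
  proof (intro ballI)
    fix r p assume r: "r \<in> V" and p: "p \<in> A_pairs rr"
    obtain x y where pxy: "p = (x, y)" by (cases p)
    have pr: "prefers rr x y" using p pxy unfolding A_pairs_def by simp
    have xy: "x \<noteq> y" using pr prefers_irrefl[OF drr] by blast
    have "\<pi> r (x, y) \<le> real (u r x {x, y})"
    proof (cases "prefers r x y")
      case True
      then show ?thesis using le1 r p pxy u_pair[OF xy] by simp
    next
      case False
      then show ?thesis using p2 r p pxy u_pair[OF xy] by simp
    qed
    then show "case p of (x, y) \<Rightarrow> \<pi> r (x, y) \<le> real (u r x {x, y})" using pxy by simp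
  qed
  have "pair_priceable C R rr"
    unfolding pair_priceable_def RV
  proof (rule exI[of _ \<pi>], intro conjI)
    show "\<forall>r\<in>V. \<forall>p\<in>A_pairs rr. 0 \<le> \<pi> r p \<and> \<pi> r p \<le> 1" using p1 le1 by blast
    show "\<forall>r\<in>V. \<forall>(x, y)\<in>A_pairs rr. \<pi> r (x, y) \<le> real (u r x {x, y})" by (rule c2)
    show "\<forall>r\<in>V. (\<Sum>p\<in>A_pairs rr. \<pi> r p) \<le> real (card C choose 2) * R r" by (rule p3)
    show "\<forall>p\<in>A_pairs rr. (\<Sum>r\<in>V. \<pi> r p) \<le> 1" by (rule p4)
    show "(\<Sum>r\<in>V. \<Sum>p\<in>A_pairs rr. \<pi> r p) > real (card C choose 2) - 1" by (rule p5)
  qed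
  moreover have "rr \<in> rankings C" using rr RV V_def by simp
  ultimately show ?thesis by blast
qed

end
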